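(* Let $\Omega\subset\mathbb{R}^N$ be a bounded smooth domain and $f$ a Carath\'eodory function satisfying $(f_1)$: for a.e. $x$, $t\mapsto f(x,t)/t$ is increasing on $(0,\infty)$ and decreasing on $(-\infty,0)$, $\alpha(x):=\lim_{t\to0}f(x,t)/t\ge0$ and $\eta(x):=\lim_{|t|\to\infty}f(x,t)/t$ exist a.e. and lie in $L^\infty(\Omega)$; and $(f_2)$: $\lambda_m(\eta)<1<\lambda_1(\alpha)$ for some $m\ge1$. Then $I$ is bounded from below on $\mathcal N$; more precisely $I(u)>0$ for all $u\in\mathcal N$.
   Context: $\|u\|^2=\int_\Omega|\nabla u|^2dx$ on $H_0^1(\Omega)$. For $\theta\in L^\infty(\Omega)$, $\lambda_1(\theta)<\lambda_2(\theta)<\cdots$ are the distinct positive eigenvalues of $-\Delta u=\lambda\theta u$ in $\Omega$, $u=0$ on $\partial\Omega$, with $\lambda_1(0)=\infty$. $F(x,t)=\int_0^tf(x,s)ds$, $I(u)=\frac12\|u\|^2-\int_\Omega F(x,u)dx$, $\mathcal N=\{u\in H_0^1(\Omega)\setminus\{0\}:\|u\|^2=\int_\Omega f(x,u)u\,dx\}$. *)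

theory Defs
  imports "HOL-Analysis.Analysis"
begin

coinductive C_inf_on :: "'a::euclidean_space set \<Rightarrow> ('a \<Rightarrow> real) \<Rightarrow> bool" where
  "(\<And>x. x \<in> U \<Longrightarrow> GDERIV f x :> g x) \<Longrightarrow> (\<And>b. b \<in> Basis \<Longrightarrow> C_inf_on U (\<lambda>x. g x \<bullet> b))
   \<Longrightarrow> C_inf_on U f"

definition Cc_inf :: "'a::euclidean_space set \<Rightarrow> ('a \<Rightarrow> real) set" where
  "Cc_inf \<Omega> = {\<phi>. C_inf_on UNIV \<phi> \<and> compact (closure {x. \<phi> x \<noteq> 0})
                  \<and> closure {x. \<phi> x \<noteq> 0} \<subseteq> \<Omega>}"

definition smooth_bounded_domain :: "'a::euclidean_space set \<Rightarrow> bool" where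
  "smooth_bounded_domain \<Omega> \<longleftrightarrow> open \<Omega> \<and> connected \<Omega> \<and> bounded \<Omega> \<and> \<Omega> \<noteq> {} \<and>
     (\<forall>p\<in>frontier \<Omega>. \<exists>r>0. \<exists>\<psi>. C_inf_on (ball p r) \<psi> \<and>
        (\<forall>x\<in>ball p r. \<exists>D. GDERIV \<psi> x :> D \<and> D \<noteq> 0) \<and>
        \<Omega> \<inter> ball p r = {x\<in>ball p r. \<psi> x < 0})"

(* H01 \<Omega> u G: u belongs to H_0^1(\<Omega>) (closure of C_c^\<infinity>(\<Omega>) in the H^1 norm)
   and G is its (weak) gradient. *)
definition H01 :: "'a::euclidean_space set \<Rightarrow> ('a \<Rightarrow> real) \<Rightarrow> ('a \<Rightarrow> 'a) \<Rightarrow> bool" where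
  "H01 \<Omega> u G \<longleftrightarrow>
     set_borel_measurable lebesgue \<Omega> u \<and> set_integrable lebesgue \<Omega> (\<lambda>x. (u x)\<^sup>2) \<and>
     set_borel_measurable lebesgue \<Omega> G \<and> set_integrable lebesgue \<Omega> (\<lambda>x. (norm (G x))\<^sup>2) \<and>
     (\<exists>\<phi> d\<phi>. (\<forall>k. \<phi> k \<in> Cc_inf \<Omega>) \<and> (\<forall>k x. GDERIV (\<phi> k) x :> d\<phi> k x) \<and>
        (\<lambda>k. \<integral>x\<in>\<Omega>. (\<phi> k x - u x)\<^sup>2 \<partial>lebesgue) \<longlonglongrightarrow> 0 \<and>
        (\<lambda>k. \<integral>x\<in>\<Omega>. (norm (d\<phi> k x - G x))\<^sup>2 \<partial>lebesgue) \<longlonglongrightarrow> 0)"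

definition nonzero_on :: "'a::euclidean_space set \<Rightarrow> ('a \<Rightarrow> real) \<Rightarrow> bool" where
  "nonzero_on \<Omega> u \<longleftrightarrow> \<not> (AE x\<in>\<Omega> in lebesgue. u x = 0)"

definition pos_eigenvalues :: "'a::euclidean_space set \<Rightarrow> ('a \<Rightarrow> real) \<Rightarrow> real set" where
  "pos_eigenvalues \<Omega> \<theta> = {l. l > 0 \<and> (\<exists>u G. H01 \<Omega> u G \<and> nonzero_on \<Omega> u \<and>
      (\<forall>v H. H01 \<Omega> v H \<longrightarrow>
         (\<integral>x\<in>\<Omega>. G x \<bullet> H x \<partial>lebesgue) = l * (\<integral>x\<in>\<Omega>. \<theta> x * u x * v x \<partial>lebesgue)))}"

(* lambda_k(\<theta>), k \<ge> 1: the k-th smallest distinct positive eigenvalue; \<infinity> if there is none *)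
definition eig :: "'a::euclidean_space set \<Rightarrow> ('a \<Rightarrow> real) \<Rightarrow> nat \<Rightarrow> ereal" where
  "eig \<Omega> \<theta> k =
     (if \<exists>l\<in>pos_eigenvalues \<Omega> \<theta>. finite {\<mu>\<in>pos_eigenvalues \<Omega> \<theta>. \<mu> < l}
                 \<and> card {\<mu>\<in>pos_eigenvalues \<Omega> \<theta>. \<mu> < l} = k - 1
      then ereal (THE l. l \<in> pos_eigenvalues \<Omega> \<theta> \<and> finite {\<mu>\<in>pos_eigenvalues \<Omega> \<theta>. \<mu> < l}
                 \<and> card {\<mu>\<in>pos_eigenvalues \<Omega> \<theta>. \<mu> < l} = k - 1)
      else \<infinity>)"

definition Fprim :: "('a \<Rightarrow> real \<Rightarrow> real) \<Rightarrow> 'a \<Rightarrow> real \<Rightarrow> real" where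
  "Fprim f x t = (LBINT s=0..t. f x s)"

definition Ifun :: "'a::euclidean_space set \<Rightarrow> ('a \<Rightarrow> real \<Rightarrow> real) \<Rightarrow> ('a \<Rightarrow> real) \<Rightarrow> ('a \<Rightarrow> 'a) \<Rightarrow> real" where
  "Ifun \<Omega> f u G = (1/2) * (\<integral>x\<in>\<Omega>. (norm (G x))\<^sup>2 \<partial>lebesgue) - (\<integral>x\<in>\<Omega>. Fprim f x (u x) \<partial>lebesgue)"

definition Nehari :: "'a::euclidean_space set \<Rightarrow> ('a \<Rightarrow> real \<Rightarrow> real) \<Rightarrow> ('a \<Rightarrow> real) \<Rightarrow> ('a \<Rightarrow> 'a) \<Rightarrow> bool" where
  "Nehari \<Omega> f u G \<longleftrightarrow> H01 \<Omega> u G \<and> nonzero_on \<Omega> u \<and>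
     (\<integral>x\<in>\<Omega>. (norm (G x))\<^sup>2 \<partial>lebesgue) = (\<integral>x\<in>\<Omega>. f x (u x) * u x \<partial>lebesgue)"

definition caratheodory :: "'a::euclidean_space set \<Rightarrow> ('a \<Rightarrow> real \<Rightarrow> real) \<Rightarrow> bool" where
  "caratheodory \<Omega> f \<longleftrightarrow> (\<forall>t. set_borel_measurable lebesgue \<Omega> (\<lambda>x. f x t)) \<and>
     (AE x\<in>\<Omega> in lebesgue. continuous_on UNIV (f x))"

definition Linfty :: "'a::euclidean_space set \<Rightarrow> ('a \<Rightarrow> real) \<Rightarrow> bool" where
  "Linfty \<Omega> \<theta> \<longleftrightarrow> set_borel_measurable lebesgue \<Omega> \<theta> \<and> (\<exists>C. AE x\<in>\<Omega> in lebesgue. \<bar>\<theta> x\<bar> \<le> C)"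

end

theory Submission
  imports Defs
begin

lemma lin_int:
  fixes a b c :: real assumes "a \<le> b"
  shows "integral {a..b} (\<lambda>s. c * s) = c * (b^2 - a^2) / 2"
proof -
  have "((\<lambda>s. c * s) has_integral ((\<lambda>s. c * s^2/2) b - (\<lambda>s. c * s^2/2) a)) {a..b}"
  proof (rule fundamental_theorem_of_calculus[OF assms, of "\<lambda>s. c * s^2/2" "\<lambda>s. c * s"])
    fix x assume "x \<in> {a..b}"
    show "((\<lambda>s. c * s^2/2) has_vector_derivative c * x) (at x within {a..b})"
      unfolding has_real_derivative_iff_has_vector_derivative[symmetric]
      by (auto intro!: derivative_eq_intros)
  qed
  then have "integral {a..b} (\<lambda>s. c * s) = c * b^2/2 - c * a^2/2" by (rule integral_unique)
  then show ?thesis by (simp add: right_diff_distrib diff_divide_distrib)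
qed

lemma floor_approx: "(\<lambda>n. real_of_int \<lfloor>real n * y\<rfloor> / real n) \<longlonglongrightarrow> y"
proof (rule tendsto_sandwich[of "\<lambda>n. y - 1 / real n" _ _ "\<lambda>n. y"])
  show "\<forall>\<^sub>F n in sequentially. y - 1 / real n \<le> real_of_int \<lfloor>real n * y\<rfloor> / real n"
    using eventually_ge_at_top[of "1::nat"]
  proof eventually_elim
    case (elim n)
    then have n: "real n > 0" by simp
    have "real n * y - 1 \<le> real_of_int \<lfloor>real n * y\<rfloor>" by linarith
    then have "(real n * y - 1) / real n \<le> real_of_int \<lfloor>real n * y\<rfloor> / real n"
      using n by (intro divide_right_mono) auto
    then show ?case using n by (simp add: diff_divide_distrib)
  qed
  show "\<forall>\<^sub>F n in sequentially. real_of_int \<lfloor>real n * y\<rfloor> / real n \<le> y"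
    using eventually_ge_at_top[of "1::nat"]
  proof eventually_elim
    case (elim n)
    then have n: "real n > 0" by simp
    have "real_of_int \<lfloor>real n * y\<rfloor> \<le> real n * y" by linarith
    then have "real_of_int \<lfloor>real n * y\<rfloor> / real n \<le> (real n * y) / real n"
      using n by (intro divide_right_mono) auto
    then show ?case using n by simp
  qed
  show "(\<lambda>n. y - 1 / real n) \<longlonglongrightarrow> y"
    using tendsto_diff[OF tendsto_const lim_inverse_n', of y] by simp
qed simp

lemma pos_case:
  fixes \<phi> :: "real \<Rightarrow> real" and t :: real
  assumes cont: "continuous_on UNIV \<phi>" and z: "\<phi> 0 = 0"
    and mono: "strict_mono_on {0<..} (\<lambda>s. \<phi> s / s)" and t: "t > 0"
  shows "(LBINT s=0..t. \<phi> s) < \<phi> t * t / 2"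
proof -
  define k where "k = \<phi> t / t"
  define k1 where "k1 = \<phi> (t/2) / (t/2)"
  have kk: "k1 < k" unfolding k_def k1_def using t by (intro strict_mono_onD[OF mono]) auto
  have ci: "continuous_on {a..b} \<phi>" for a b using cont continuous_on_subset by blast
  have "(LBINT s=0..t. \<phi> s) = integral {0..t} \<phi>"
    using t interval_integral_eq_integral[of 0 t \<phi>, OF _ borel_integrable_atLeastAtMost'[OF ci]]
    by (simp add: zero_ereal_def)
  also have "\<dots> = integral {0..t/2} \<phi> + integral {t/2..t} \<phi>"
    using t Henstock_Kurzweil_Integration.integral_combine[where a=0 and c="t/2" and b=t and f=\<phi>, OF _ _ integrable_continuous_interval[OF ci]] by simp
  also have "\<dots> \<le> integral {0..t/2} (\<lambda>s. k1 * s) + integral {t/2..t} (\<lambda>s. k * s)"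
  proof (intro add_mono integral_le integrable_continuous_interval ci)
    fix s assume s: "s \<in> {0..t/2}"
    show "\<phi> s \<le> k1 * s"
    proof (cases "s = 0")
      case True then show ?thesis using z by simp
    next
      case False
      then have s0: "s > 0" using s by auto
      have "\<phi> s / s \<le> k1"
      proof (cases "s = t/2")
        case True then show ?thesis unfolding k1_def by (simp only:)
      next
        case False
        then have "\<phi> s / s < \<phi> (t/2) / (t/2)" using s s0 by (intro strict_mono_onD[OF mono]) auto
        then show ?thesis by (simp add: k1_def)
      qed
      then show ?thesis using s0 by (simp add: field_simps)
    qed
  next
    fix s assume s: "s \<in> {t/2..t}"
    then have s0: "s > 0" using t by auto
    have "\<phi> s / s \<le> k"
    proof (cases "s = t")
      case True then show ?thesis by (simp add: k_def)
    next
      case False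
      then have "\<phi> s / s < \<phi> t / t" using s s0 by (intro strict_mono_onD[OF mono]) auto
      then show ?thesis by (simp add: k_def)
    qed
    then show "\<phi> s \<le> k * s" using s0 by (simp add: field_simps)
  qed (auto intro!: continuous_intros)
  also have "\<dots> = k1 * (t/2)^2 / 2 + k * (t^2 - (t/2)^2) / 2"
    using t by (simp add: lin_int)
  also have "\<dots> < k * t^2 / 2"
  proof -
    have "k1 * (t/2)^2 < k * (t/2)^2" using kk t by simp
    then show ?thesis by (simp add: field_simps power2_eq_square)
  qed
  also have "\<dots> = \<phi> t * t / 2" unfolding k_def using t by (simp add: power2_eq_square)
  finally show ?thesis .
qed

lemma pointwise:
  fixes \<phi> :: "real \<Rightarrow> real" and a e :: real
  assumes cont: "continuous_on UNIV \<phi>"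
    and mono: "strict_mono_on {0<..} (\<lambda>t. \<phi> t / t)"
    and anti: "strict_antimono_on {..<0} (\<lambda>t. \<phi> t / t)"
    and la: "((\<lambda>t. \<phi> t / t) \<longlongrightarrow> a) (at 0)" and a0: "a \<ge> 0"
    and le: "((\<lambda>t. \<phi> t / t) \<longlongrightarrow> e) at_infinity"
  shows "\<phi> 0 = 0" and "\<And>t. t \<noteq> 0 \<Longrightarrow> a \<le> \<phi> t / t \<and> \<phi> t / t \<le> e"
    and "\<And>t. t \<noteq> 0 \<Longrightarrow> 0 < \<phi> t * t"
    and "\<And>t. t \<noteq> 0 \<Longrightarrow> (LBINT s=0..t. \<phi> s) < \<phi> t * t / 2"
proof -
  have ic: "isCont \<phi> x" for x using cont by (simp add: continuous_on_eq_continuous_at)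
  have "((\<lambda>t. \<phi> t / t * t) \<longlongrightarrow> a * 0) (at 0)"
    by (intro tendsto_mult la tendsto_ident_at)
  moreover have "eventually (\<lambda>t. \<phi> t / t * t = \<phi> t) (at (0::real))"
    by (auto simp: eventually_at_filter)
  ultimately have "(\<phi> \<longlongrightarrow> 0) (at 0)" using tendsto_cong by force
  moreover have "(\<phi> \<longlongrightarrow> \<phi> 0) (at 0)" using ic[of 0] by (simp add: isCont_def)
  ultimately show z: "\<phi> 0 = 0" using tendsto_unique[of "at (0::real)"] by force
  show bnd: "a \<le> \<phi> t / t \<and> \<phi> t / t \<le> e" if t: "t \<noteq> 0" for t
  proof (cases "t > 0")
    case True
    have "a \<le> \<phi> t / t"
    proof (rule tendsto_upperbound)
      show "((\<lambda>t. \<phi> t / t) \<longlongrightarrow> a) (at_right 0)"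
        using la by (rule tendsto_within_subset) simp
      show "\<forall>\<^sub>F s in at_right 0. \<phi> s / s \<le> \<phi> t / t"
        using eventually_at_right_real[OF True] 
        by eventually_elim (auto intro!: less_imp_le monotone_onD[OF mono])
    qed simp
    moreover have "\<phi> t / t \<le> e"
    proof (rule tendsto_lowerbound)
      show "((\<lambda>t. \<phi> t / t) \<longlongrightarrow> e) at_top"
        using le by (rule tendsto_mono[OF at_top_le_at_infinity])
      show "\<forall>\<^sub>F s in at_top. \<phi> t / t \<le> \<phi> s / s"
        using eventually_ge_at_top[of t]
        by eventually_elim (use True in \<open>auto intro!: strict_mono_on_leD[OF mono]\<close>)
    qed simp
    ultimately show ?thesis by simp
  next
    case False
    then have tn: "t < 0" using t by simp
    have "a \<le> \<phi> t / t"
    proof (rule tendsto_upperbound)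
      show "((\<lambda>t. \<phi> t / t) \<longlongrightarrow> a) (at_left 0)"
        using la by (rule tendsto_within_subset) simp
      show "\<forall>\<^sub>F s in at_left 0. \<phi> s / s \<le> \<phi> t / t"
        using eventually_at_left_real[OF tn]
        by eventually_elim (auto intro!: less_imp_le monotone_onD[OF anti])
    qed simp
    moreover have "\<phi> t / t \<le> e"
    proof (rule tendsto_lowerbound)
      show "((\<lambda>t. \<phi> t / t) \<longlongrightarrow> e) at_bot"
        using le by (rule tendsto_mono[OF at_bot_le_at_infinity])
      show "\<forall>\<^sub>F s in at_bot. \<phi> t / t \<le> \<phi> s / s"
        using eventually_le_at_bot[of t]
      proof eventually_elim
        case (elim s)
        show ?case
        proof (cases "s = t")
          case False
          then show ?thesis using elim tn by (auto intro!: less_imp_le monotone_onD[OF anti])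
        qed simp
      qed
    qed simp
    ultimately show ?thesis by simp
  qed
  have gt: "\<phi> (t/2) / (t/2) < \<phi> t / t" if t: "t \<noteq> 0" for t
  proof (cases "t > 0")
    case True then show ?thesis by (intro monotone_onD[OF mono]) auto
  next
    case False then have "t < 0" using t by simp
    then show ?thesis by (intro monotone_onD[OF anti]) auto
  qed
  show pos: "0 < \<phi> t * t" if t: "t \<noteq> 0" for t
  proof -
    have "0 < \<phi> t / t" using gt[OF t] bnd[of "t/2"] t a0 by simp
    moreover have "0 < t * t" using t by (simp add: zero_less_mult_iff) linarith
    ultimately have "0 < \<phi> t / t * (t * t)" by (rule mult_pos_pos)
    moreover have "\<phi> t / t * (t * t) = \<phi> t * t" using t by (simp add: divide_simps)
    ultimately show ?thesis by simp
  qed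
  show "(LBINT s=0..t. \<phi> s) < \<phi> t * t / 2" if t: "t \<noteq> 0" for t
  proof (cases "t > 0")
    case True then show ?thesis using pos_case[OF cont z mono] by simp
  next
    case False then have tn: "t < 0" using t by simp
    define \<psi> where "\<psi> s = - \<phi> (- s)" for s
    have c2: "continuous_on UNIV \<psi>" unfolding \<psi>_def
      by (intro continuous_intros continuous_on_compose2[OF cont]) auto
    have m2: "strict_mono_on {0<..} (\<lambda>s. \<psi> s / s)"
    proof (rule strict_mono_onI)
      fix r s :: real assume "r \<in> {0<..}" "s \<in> {0<..}" "r < s"
      then have "\<phi> (-r) / (-r) < \<phi> (-s) / (-s)" by (intro monotone_onD[OF anti]) auto
      then show "\<psi> r / r < \<psi> s / s" unfolding \<psi>_def by simp
    qed
    have "(LBINT s=0..t. \<phi> s) = (LBINT s=-t..0. \<phi> (-s))"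
      using interval_integral_reflect[of 0 t \<phi>] by simp
    also have "\<dots> = (LBINT s=0..-t. \<psi> s)"
      unfolding \<psi>_def by (simp add: interval_lebesgue_integral_uminus interval_integral_endpoints_reverse[of "ereal (-t)"])
    also have "\<dots> < \<psi> (-t) * (-t) / 2" using pos_case[OF c2 _ m2, of "-t"] tn z by (simp add: \<psi>_def)
    also have "\<dots> = \<phi> t * t / 2" by (simp add: \<psi>_def)
    finally show ?thesis .
  qed
qed

lemma cara_meas:
  fixes f :: "'a::euclidean_space \<Rightarrow> real \<Rightarrow> real"
  assumes car: "caratheodory \<Omega> f" and u: "set_borel_measurable lebesgue \<Omega> u"
  shows "set_borel_measurable lebesgue \<Omega> (\<lambda>x. f x (u x))"
proof -
  define u' where "u' = (\<lambda>x. indicator \<Omega> x * u x)"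
  have u'm: "u' \<in> borel_measurable lebesgue"
    using u by (simp add: set_borel_measurable_def u'_def)
  have fm: "(\<lambda>x. indicator \<Omega> x * f x t) \<in> borel_measurable lebesgue" for t
    using car by (simp add: caratheodory_def set_borel_measurable_def)
  define h where "h n x = indicator \<Omega> x * f x (real_of_int \<lfloor>real n * u' x\<rfloor> / real n)" for n x
  have hm: "h n \<in> borel_measurable lebesgue" for n
  proof -
    have g: "(\<lambda>x. \<lfloor>real n * u' x\<rfloor>) \<in> measurable lebesgue (count_space UNIV)"
      by (rule measurable_compose[OF _ measurable_real_floor]) (use u'm in simp)
    show ?thesis unfolding h_def
      by (rule measurable_compose_countable[where f="\<lambda>k x. indicator \<Omega> x * f x (real_of_int k / real n)", OF fm g])
  qed
  have lm: "(\<lambda>x. lim (\<lambda>n. h n x)) \<in> borel_measurable lebesgue"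
    by (rule borel_measurable_lim_metric) (rule hm)
  have "AE x in lebesgue. x \<in> \<Omega> \<longrightarrow> continuous_on UNIV (f x)"
    using car by (simp add: caratheodory_def)
  then have "AE x in lebesgue. lim (\<lambda>n. h n x) = indicator \<Omega> x *\<^sub>R f x (u x)"
  proof eventually_elim
    case (elim x)
    show ?case
    proof (cases "x \<in> \<Omega>")
      case False then show ?thesis by (simp add: h_def)
    next
      case True
      then have ux: "u' x = u x" by (simp add: u'_def)
      have ic: "isCont (f x) (u x)" using elim True by (simp add: continuous_on_eq_continuous_at)
      have "(\<lambda>n. f x (real_of_int \<lfloor>real n * u' x\<rfloor> / real n)) \<longlonglongrightarrow> f x (u x)"
        using isCont_tendsto_compose[OF ic floor_approx[of "u x"]] ux by simp
      then have "(\<lambda>n. h n x) \<longlonglongrightarrow> f x (u x)" using True by (simp add: h_def)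
      then show ?thesis using True by (simp add: limI)
    qed
  qed
  then show ?thesis unfolding set_borel_measurable_def by (rule borel_measurable_AE[OF lm])
qed

lemma pos_int:
  fixes g u :: "'a::euclidean_space \<Rightarrow> real"
  assumes int: "set_integrable lebesgue \<Omega> g"
    and nn: "AE x\<in>\<Omega> in lebesgue. 0 \<le> g x"
    and ps: "AE x\<in>\<Omega> in lebesgue. u x \<noteq> 0 \<longrightarrow> 0 < g x"
    and nz: "nonzero_on \<Omega> u"
  shows "(\<integral>x\<in>\<Omega>. g x \<partial>lebesgue) > 0"
proof -
  define h where "h = (\<lambda>x. indicator \<Omega> x *\<^sub>R g x)"
  have hi: "integrable lebesgue h" using int by (simp add: set_integrable_def h_def)
  have hn: "AE x in lebesgue. 0 \<le> h x" using nn by eventually_elim (simp add: h_def indicator_def)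
  have "integral\<^sup>L lebesgue h \<ge> 0" using hn by (rule integral_nonneg_AE)
  moreover have "integral\<^sup>L lebesgue h \<noteq> 0"
  proof
    assume "integral\<^sup>L lebesgue h = 0"
    then have "AE x in lebesgue. h x = 0" using integral_nonneg_eq_0_iff_AE[OF hi hn] by simp
    then have "AE x\<in>\<Omega> in lebesgue. u x = 0" using ps
      by eventually_elim (auto simp: h_def)
    then show False using nz by (simp add: nonzero_on_def)
  qed
  ultimately show ?thesis by (simp add: set_lebesgue_integral_def h_def)
qed

lemma Fprim_zero: "Fprim f x 0 = 0"
  by (simp add: Fprim_def interval_lebesgue_integral_def zero_ereal_def einterval_same set_lebesgue_integral_def)

theorem lemma3p4:
  fixes \<Omega> :: "'a::euclidean_space set" and f :: "'a \<Rightarrow> real \<Rightarrow> real"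
    and \<alpha> \<eta> :: "'a \<Rightarrow> real"
  assumes dom: "smooth_bounded_domain \<Omega>"
    and car: "caratheodory \<Omega> f"
    and f1_mono: "AE x\<in>\<Omega> in lebesgue. strict_mono_on {0<..} (\<lambda>t. f x t / t) \<and>
                     strict_antimono_on {..<0} (\<lambda>t. f x t / t)"
    and f1_alpha: "AE x\<in>\<Omega> in lebesgue. ((\<lambda>t. f x t / t) \<longlongrightarrow> \<alpha> x) (at 0) \<and> \<alpha> x \<ge> 0"
    and f1_eta: "AE x\<in>\<Omega> in lebesgue. ((\<lambda>t. f x t / t) \<longlongrightarrow> \<eta> x) at_infinity"
    and Linf: "Linfty \<Omega> \<alpha>" "Linfty \<Omega> \<eta>"
    and f2: "\<exists>m\<ge>1. eig \<Omega> \<eta> m < 1" "1 < eig \<Omega> \<alpha> 1"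
  shows "(\<exists>c. \<forall>u G. Nehari \<Omega> f u G \<longrightarrow> Ifun \<Omega> f u G \<ge> c) \<and>
         (\<forall>u G. Nehari \<Omega> f u G \<longrightarrow> Ifun \<Omega> f u G > 0)"
proof -
  from Linf(2) obtain Ce where Ce: "AE x\<in>\<Omega> in lebesgue. \<bar>\<eta> x\<bar> \<le> Ce"
    by (auto simp: Linfty_def)
  define C where "C = \<bar>Ce\<bar>"
  have C0: "C \<ge> 0" by (simp add: C_def)
  have good: "AE x\<in>\<Omega> in lebesgue. f x 0 = 0 \<and>
     (\<forall>t. t \<noteq> 0 \<longrightarrow> 0 < f x t * t \<and> f x t * t \<le> C * t\<^sup>2) \<and>
     (\<forall>t. t \<noteq> 0 \<longrightarrow> Fprim f x t < f x t * t / 2)"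
    using car[unfolded caratheodory_def, THEN conjunct2] f1_mono f1_alpha f1_eta Ce
  proof eventually_elim
    case (elim x)
    show ?case
    proof
      assume x: "x \<in> \<Omega>"
      then have c: "continuous_on UNIV (f x)"
        and m: "strict_mono_on {0<..} (\<lambda>t. f x t / t)"
        and am: "strict_antimono_on {..<0} (\<lambda>t. f x t / t)"
        and la: "((\<lambda>t. f x t / t) \<longlongrightarrow> \<alpha> x) (at 0)" and a0: "\<alpha> x \<ge> 0"
        and le: "((\<lambda>t. f x t / t) \<longlongrightarrow> \<eta> x) at_infinity"
        and ce: "\<bar>\<eta> x\<bar> \<le> Ce"
        using elim by auto
      note P = pointwise[OF c m am la a0 le]
      have bd: "f x t * t \<le> C * t\<^sup>2" if t: "t \<noteq> 0" for t
      proof -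
        have "f x t / t \<le> C" using P(2)[OF t] ce unfolding C_def by linarith
        then have "f x t / t * t\<^sup>2 \<le> C * t\<^sup>2" by (rule mult_right_mono) simp
        moreover have "f x t / t * t\<^sup>2 = f x t * t" using t by (simp add: power2_eq_square)
        ultimately show ?thesis by simp
      qed
      show "f x 0 = 0 \<and> (\<forall>t. t \<noteq> 0 \<longrightarrow> 0 < f x t * t \<and> f x t * t \<le> C * t\<^sup>2) \<and>
           (\<forall>t. t \<noteq> 0 \<longrightarrow> Fprim f x t < f x t * t / 2)"
        using P(1) P(3) P(4) bd by (simp add: Fprim_def)
    qed
  qed
  have pos: "Ifun \<Omega> f u G > 0" if N: "Nehari \<Omega> f u G" for u G
  proof -
    have H: "H01 \<Omega> u G" and nz: "nonzero_on \<Omega> u"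
      and eq: "(\<integral>x\<in>\<Omega>. (norm (G x))\<^sup>2 \<partial>lebesgue) = (\<integral>x\<in>\<Omega>. f x (u x) * u x \<partial>lebesgue)"
      using N by (auto simp: Nehari_def)
    have um: "set_borel_measurable lebesgue \<Omega> u"
      and u2: "set_integrable lebesgue \<Omega> (\<lambda>x. (u x)\<^sup>2)"
      using H by (auto simp: H01_def)
    have fm: "set_borel_measurable lebesgue \<Omega> (\<lambda>x. f x (u x))" by (rule cara_meas[OF car um])
    have fum: "(\<lambda>x. indicator \<Omega> x *\<^sub>R (f x (u x) * u x)) \<in> borel_measurable lebesgue"
    proof -
      have "(\<lambda>x. (indicator \<Omega> x *\<^sub>R f x (u x)) * (indicator \<Omega> x *\<^sub>R u x)) \<in> borel_measurable lebesgue"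
        using fm um by (simp add: set_borel_measurable_def)
      also have "(\<lambda>x. (indicator \<Omega> x *\<^sub>R f x (u x)) * (indicator \<Omega> x *\<^sub>R u x)) =
          (\<lambda>x. indicator \<Omega> x *\<^sub>R (f x (u x) * u x))"
        by (auto simp: fun_eq_iff indicator_def)
      finally show ?thesis .
    qed
    have fui: "set_integrable lebesgue \<Omega> (\<lambda>x. f x (u x) * u x)"
      unfolding set_integrable_def
    proof (rule Bochner_Integration.integrable_bound[OF _ fum])
      show "integrable lebesgue (\<lambda>x. C * (indicator \<Omega> x *\<^sub>R (u x)\<^sup>2))"
        using u2 by (simp add: set_integrable_def)
      show "AE x in lebesgue. norm (indicator \<Omega> x *\<^sub>R (f x (u x) * u x))
               \<le> norm (C * (indicator \<Omega> x *\<^sub>R (u x)\<^sup>2))"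
        using good
      proof eventually_elim
        case (elim x)
        show ?case
        proof (cases "x \<in> \<Omega>")
          case True
          show ?thesis
          proof (cases "u x = 0")
            case True then show ?thesis by simp
          next
            case False
            then have "0 < f x (u x) * u x" "f x (u x) * u x \<le> C * (u x)\<^sup>2"
              using elim \<open>x \<in> \<Omega>\<close> by auto
            then show ?thesis using True C0 by simp
          qed
        qed simp
      qed
    qed
    have A: "(\<integral>x\<in>\<Omega>. f x (u x) * u x \<partial>lebesgue) > 0"
    proof (rule pos_int[OF fui _ _ nz])
      show "AE x\<in>\<Omega> in lebesgue. 0 \<le> f x (u x) * u x"
        using good by eventually_elim (metis less_imp_le mult_zero_right order_refl)
      show "AE x\<in>\<Omega> in lebesgue. u x \<noteq> 0 \<longrightarrow> 0 < f x (u x) * u x"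
        using good by eventually_elim auto
    qed
    show ?thesis
    proof (cases "set_integrable lebesgue \<Omega> (\<lambda>x. Fprim f x (u x))")
      case True
      have i1: "set_integrable lebesgue \<Omega> (\<lambda>x. (1/2) * (f x (u x) * u x))"
        using fui by simp
      have "(\<integral>x\<in>\<Omega>. (1/2) * (f x (u x) * u x) - Fprim f x (u x) \<partial>lebesgue) > 0"
      proof (rule pos_int[OF set_integral_diff(1)[OF i1 True] _ _ nz])
        show "AE x\<in>\<Omega> in lebesgue. 0 \<le> 1 / 2 * (f x (u x) * u x) - Fprim f x (u x)"
          using good
        proof eventually_elim
          case (elim x)
          show ?case
          proof
            assume x: "x \<in> \<Omega>"
            show "0 \<le> 1 / 2 * (f x (u x) * u x) - Fprim f x (u x)"
            proof (cases "u x = 0")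
              case True then show ?thesis by (simp add: Fprim_zero)
            next
              case False then show ?thesis using elim x by force
            qed
          qed
        qed
        show "AE x\<in>\<Omega> in lebesgue. u x \<noteq> 0 \<longrightarrow> 0 < 1 / 2 * (f x (u x) * u x) - Fprim f x (u x)"
          using good by eventually_elim force
      qed
      also have "(\<integral>x\<in>\<Omega>. (1/2) * (f x (u x) * u x) - Fprim f x (u x) \<partial>lebesgue) = Ifun \<Omega> f u G"
        unfolding Ifun_def eq set_integral_diff(2)[OF i1 True] by simp
      finally show ?thesis .
    next
      case False
      then have "(\<integral>x\<in>\<Omega>. Fprim f x (u x) \<partial>lebesgue) = 0"
        by (simp add: set_integrable_def set_lebesgue_integral_def not_integrable_integral_eq)
      then show ?thesis using A by (simp add: Ifun_def eq)
    qed
  qed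
  show ?thesis
  proof
    show "\<exists>c. \<forall>u G. Nehari \<Omega> f u G \<longrightarrow> Ifun \<Omega> f u G \<ge> c"
      using pos by (intro exI[of _ 0]) (auto intro: less_imp_le)
    show "\<forall>u G. Nehari \<Omega> f u G \<longrightarrow> Ifun \<Omega> f u G > 0" using pos by blast
  qed
qed

end
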